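(* Let $G$ be generated by the random planted model with $p\ge(10\ln n)/\sqrt k$. Then with high probability over the input, $S$ is the unique set of $k$ vertices of $G$ whose induced subgraph is bipartite.
   Context: Random planted model with parameters $n,k,d,p$: $V$ has $n$ vertices, $S\subset V$ with $|S|=k$, the graph induced on $S$ is an arbitrary connected $d$-regular bipartite graph with parts $S_1,S_2$, and each pair in $S\times(V\setminus S)$ and in $(V\setminus S)\times(V\setminus S)$ is an edge independently with probability $p$. *)

theory Defs
  imports "HOL-Probability.Probability"
begin

text \<open>Vertices are {0..<n}. Unordered pairs {u,v} are encoded as (u,v) with u < v.
  The random pairs are those not lying inside S.\<close>

definition rand_pairs :: "nat \<Rightarrow> nat set \<Rightarrow> (nat \<times> nat) set" where
  "rand_pairs n S = {(u,v). u < v \<and> v < n \<and> \<not> (u \<in> S \<and> v \<in> S)}"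

definition planted_pmf :: "nat \<Rightarrow> nat set \<Rightarrow> real \<Rightarrow> (nat \<times> nat \<Rightarrow> bool) pmf" where
  "planted_pmf n S p = Pi_pmf (rand_pairs n S) False (\<lambda>_. bernoulli_pmf p)"

definition planted_adj :: "nat set \<Rightarrow> (nat \<Rightarrow> nat \<Rightarrow> bool) \<Rightarrow> (nat \<times> nat \<Rightarrow> bool)
    \<Rightarrow> nat \<Rightarrow> nat \<Rightarrow> bool" where
  "planted_adj S H X u v =
     (if u \<in> S \<and> v \<in> S then H u v
      else if u < v then X (u, v) else if v < u then X (v, u) else False)"

definition bipartite_on :: "(nat \<Rightarrow> nat \<Rightarrow> bool) \<Rightarrow> nat set \<Rightarrow> bool" where
  "bipartite_on E A = (\<exists>T \<subseteq> A. \<forall>u\<in>A. \<forall>v\<in>A. E u v \<longrightarrow> (u \<in> T \<longleftrightarrow> v \<notin> T))"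

definition connected_on :: "(nat \<Rightarrow> nat \<Rightarrow> bool) \<Rightarrow> nat set \<Rightarrow> bool" where
  "connected_on E A = (\<forall>u\<in>A. \<forall>v\<in>A. (\<lambda>x y. x \<in> A \<and> y \<in> A \<and> E x y)\<^sup>*\<^sup>* u v)"

definition regular_on :: "(nat \<Rightarrow> nat \<Rightarrow> bool) \<Rightarrow> nat set \<Rightarrow> nat \<Rightarrow> bool" where
  "regular_on E A d = (\<forall>v\<in>A. card {u\<in>A. E v u} = d)"

definition planted_graph :: "nat set \<Rightarrow> nat \<Rightarrow> (nat \<Rightarrow> nat \<Rightarrow> bool) \<Rightarrow> bool" where
  "planted_graph S d H =
     ((\<forall>u\<in>S. \<forall>v\<in>S. H u v \<longleftrightarrow> H v u) \<and> (\<forall>u\<in>S. \<not> H u u) \<and>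
      connected_on H S \<and> regular_on H S d \<and>
      (\<exists>S1 S2. S1 \<union> S2 = S \<and> S1 \<inter> S2 = {} \<and>
         (\<forall>u\<in>S. \<forall>v\<in>S. H u v \<longrightarrow> (u \<in> S1 \<and> v \<in> S2) \<or> (u \<in> S2 \<and> v \<in> S1))))"

end

theory Submission
  imports Defs
begin


lemma prob_no_edges:
  assumes "finite A" "P \<subseteq> A" "0 \<le> p" "p \<le> 1"
  shows "measure_pmf.prob (Pi_pmf A False (\<lambda>_. bernoulli_pmf p)) {X. \<forall>e\<in>P. \<not> X e} = (1-p) ^ card P"
proof -
  have "{X. \<forall>e\<in>P. \<not> X e} = Pi A (\<lambda>e. if e \<in> P then {False} else UNIV)"
    using assms(2) by (auto simp: Pi_def split: if_splits)
  hence "measure_pmf.prob (Pi_pmf A False (\<lambda>_. bernoulli_pmf p)) {X. \<forall>e\<in>P. \<not> X e}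
     = (\<Prod>e\<in>A. measure_pmf.prob (bernoulli_pmf p) (if e \<in> P then {False} else UNIV))"
    using measure_Pi_pmf_Pi[OF assms(1)] by simp
  also have "\<dots> = (\<Prod>e\<in>A. if e \<in> P then 1 - p else 1)"
    using assms by (intro prod.cong) (auto simp: measure_pmf_single)
  also have "\<dots> = (1-p) ^ card (A \<inter> P)"
    using assms(1) by (simp add: prod.If_cases)
  finally show ?thesis using assms(2) by (simp add: Int_absorb1)
qed


lemma double_count:
  assumes "finite X" "finite Y"
  shows "(\<Sum>x\<in>X. card {y\<in>Y. R x y}) = (\<Sum>y\<in>Y. card {x\<in>X. R x y})"
proof -
  have "(\<Sum>x\<in>X. card {y\<in>Y. R x y}) = (\<Sum>x\<in>X. \<Sum>y\<in>Y. if R x y then 1 else 0)"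
    using assms by (simp add: sum.inter_filter[symmetric])
  also have "\<dots> = (\<Sum>y\<in>Y. \<Sum>x\<in>X. if R x y then 1 else 0)" by (rule sum.swap)
  also have "\<dots> = (\<Sum>y\<in>Y. card {x\<in>X. R x y})"
    using assms by (simp add: sum.inter_filter[symmetric])
  finally show ?thesis .
qed

locale pg =
  fixes S :: "nat set" and d :: nat and H :: "nat \<Rightarrow> nat \<Rightarrow> bool"
  assumes finS: "finite S" and pg: "planted_graph S d H"
begin

lemma symH: "u \<in> S \<Longrightarrow> v \<in> S \<Longrightarrow> H u v \<Longrightarrow> H v u"
  using pg unfolding planted_graph_def by blast

lemma irrH: "u \<in> S \<Longrightarrow> \<not> H u u"
  using pg unfolding planted_graph_def by blast

lemma regH: "v \<in> S \<Longrightarrow> card {u\<in>S. H v u} = d"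
  using pg unfolding planted_graph_def regular_on_def by blast

lemma connH: "u \<in> S \<Longrightarrow> v \<in> S \<Longrightarrow> (\<lambda>x y. x \<in> S \<and> y \<in> S \<and> H x y)\<^sup>*\<^sup>* u v"
  using pg unfolding planted_graph_def connected_on_def by blast

lemma d_pos:
  assumes "card S \<ge> 2" shows "d \<ge> 1"
proof -
  obtain u v where uv: "u \<in> S" "v \<in> S" "u \<noteq> v"
    using card_le_Suc0_iff_eq[OF finS] assms by force
  have "(\<lambda>x y. x \<in> S \<and> y \<in> S \<and> H x y)\<^sup>*\<^sup>* u v" using connH uv by auto
  then obtain w where w: "w \<in> S" "H u w"
    using uv(3) by (cases rule: converse_rtranclpE) auto
  have "{u'\<in>S. H u u'} \<noteq> {}" using w by auto
  hence "card {u'\<in>S. H u u'} \<noteq> 0" using finS by simp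
  thus ?thesis using regH[OF uv(1)] by simp
qed

lemma indep_le:
  assumes I: "I \<subseteq> S" "\<forall>u\<in>I. \<forall>v\<in>I. \<not> H u v" and d1: "d \<ge> 1"
  shows "2 * card I \<le> card S"
proof -
  have fI: "finite I" using finite_subset[OF I(1) finS] .
  have "(\<Sum>v\<in>I. card {u\<in>S. H v u}) = (\<Sum>v\<in>I. d)"
    using regH I(1) by (intro sum.cong) auto
  hence "d * card I = (\<Sum>v\<in>I. card {u\<in>S. H v u})" by simp
  also have "\<dots> = (\<Sum>v\<in>I. card {u\<in>S - I. H v u})"
    using I by (intro sum.cong) (auto intro!: arg_cong[where f=card])
  also have "\<dots> = (\<Sum>u\<in>S - I. card {v\<in>I. H v u})"
    using fI finS by (intro double_count) auto
  also have "\<dots> \<le> (\<Sum>u\<in>S - I. card {v\<in>S. H u v})"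
    using I finS symH by (intro sum_mono card_mono) auto
  also have "\<dots> = d * card (S - I)" using regH by auto
  finally have "card I \<le> card (S - I)" using d1 by simp
  thus ?thesis using card_Diff_subset[OF fI I(1)] card_mono[OF finS I(1)] by linarith
qed

definition conn :: "nat set \<Rightarrow> nat \<Rightarrow> nat \<Rightarrow> bool" where
  "conn B = (\<lambda>x y. x \<in> B \<and> y \<in> B \<and> H x y)\<^sup>*\<^sup>*"

definition comp :: "nat set \<Rightarrow> nat \<Rightarrow> nat set" where
  "comp B v = {u. conn B v u}"

lemma conn_refl: "conn B v v" unfolding conn_def by simp

lemma conn_trans: "conn B x y \<Longrightarrow> conn B y z \<Longrightarrow> conn B x z"
  unfolding conn_def by (rule rtranclp_trans)

lemma conn_edge: "x \<in> B \<Longrightarrow> y \<in> B \<Longrightarrow> H x y \<Longrightarrow> conn B x y"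
  unfolding conn_def by auto

lemma conn_sym:
  assumes B: "B \<subseteq> S" shows "conn B x y \<Longrightarrow> conn B y x"
  unfolding conn_def
proof (induction rule: rtranclp_induct)
  case base then show ?case by simp
next
  case (step y z)
  have "(\<lambda>x y. x \<in> B \<and> y \<in> B \<and> H x y) z y" using step B symH by auto
  then show ?case using step(3) by (rule converse_rtranclp_into_rtranclp)
qed

lemma conn_in: "conn B x y \<Longrightarrow> x \<in> B \<Longrightarrow> y \<in> B"
  unfolding conn_def by (induction rule: rtranclp_induct) auto

lemma comp_sub: "v \<in> B \<Longrightarrow> comp B v \<subseteq> B"
  unfolding comp_def using conn_in by auto

lemma comp_eq: assumes "B \<subseteq> S" "conn B v u" shows "comp B v = comp B u"
proof -
  have "conn B u v" using conn_sym[OF assms] .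
  then show ?thesis unfolding comp_def using assms(2) conn_trans[of B u v] conn_trans[of B v u] by auto
qed

lemma comp_disj: assumes "B \<subseteq> S" "comp B v \<noteq> comp B u" shows "comp B v \<inter> comp B u = {}"
proof (rule ccontr)
  assume "comp B v \<inter> comp B u \<noteq> {}"
  then obtain x where "conn B v x" "conn B u x" unfolding comp_def by auto
  hence "conn B v u" using conn_sym[OF assms(1)] conn_trans by metis
  thus False using comp_eq[OF assms(1)] assms(2) by auto
qed

lemma boundary:
  assumes B: "B \<subseteq> S" and v: "v \<in> B" and r: "r \<in> S" "r \<notin> B"
  shows "\<exists>u. conn B v u \<and> (\<exists>r'\<in>S - B. H u r')"
proof -
  have "(\<lambda>x y. x \<in> S \<and> y \<in> S \<and> H x y)\<^sup>*\<^sup>* v r" using connH v B r by auto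
  then show ?thesis using v
  proof (induction rule: converse_rtranclp_induct)
    case base then show ?case using r by auto
  next
    case (step x x')
    show ?case
    proof (cases "x' \<in> B")
      case True
      then obtain u where "conn B x' u" "\<exists>r'\<in>S - B. H u r'" using step by auto
      moreover have "conn B x x'" using step True by (intro conn_edge) auto
      ultimately show ?thesis using conn_trans by blast
    next
      case False
      then show ?thesis using step conn_refl by auto
    qed
  qed
qed

definition comps :: "nat set \<Rightarrow> nat set set" where
  "comps B = comp B ` B"

lemma card_comps1:
  assumes B: "B \<subseteq> S" "B \<noteq> S"
  shows "card (comps B) \<le> d * card (S - B)"
proof -
  obtain r where r: "r \<in> S" "r \<notin> B" using B by auto
  define f where "f C = (SOME u. u \<in> C \<and> (\<exists>r'\<in>S - B. H u r'))" for C
  have f: "f C \<in> C \<and> (\<exists>r'\<in>S - B. H (f C) r')" if Cc: "C \<in> comps B" for C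
  proof -
    obtain v where v: "v \<in> B" "C = comp B v" using Cc unfolding comps_def by blast
    obtain u where "conn B v u" "\<exists>r'\<in>S - B. H u r'" using boundary[OF B(1) v(1) r] by auto
    hence "\<exists>u. u \<in> C \<and> (\<exists>r'\<in>S - B. H u r')" using v unfolding comp_def by auto
    thus ?thesis unfolding f_def by (rule someI_ex)
  qed
  have inj: "inj_on f (comps B)"
  proof (rule inj_onI)
    fix C1 C2 assume C: "C1 \<in> comps B" "C2 \<in> comps B" "f C1 = f C2"
    show "C1 = C2"
    proof (rule ccontr)
      assume ne: "C1 \<noteq> C2"
      obtain v1 where "v1 \<in> B" "C1 = comp B v1" using C(1) unfolding comps_def by blast
      moreover obtain v2 where "v2 \<in> B" "C2 = comp B v2" using C(2) unfolding comps_def by blast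
      ultimately have "C1 \<inter> C2 = {}" using comp_disj[OF B(1)] ne by auto
      moreover have "f C1 \<in> C1" using f[OF C(1)] by simp
      moreover have "f C2 \<in> C2" using f[OF C(2)] by simp
      ultimately show False using C(3) by auto
    qed
  qed
  have sub: "f ` comps B \<subseteq> (\<Union>r\<in>S - B. {u\<in>S. H r u})"
  proof
    fix x assume "x \<in> f ` comps B"
    then obtain C where C: "C \<in> comps B" "x = f C" by blast
    obtain v where v: "v \<in> B" "C = comp B v" using C(1) unfolding comps_def by blast
    have xC: "x \<in> C" using f[OF C(1)] C(2) by simp
    have xB: "x \<in> B" using xC comp_sub[OF v(1)] v(2) by blast
    obtain r' where r': "r' \<in> S - B" "H x r'" using f[OF C(1)] C(2) by blast
    have "H r' x" using symH[of x r'] r' xB B by blast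
    then show "x \<in> (\<Union>r\<in>S - B. {u\<in>S. H r u})" using r' xB B by blast
  qed
  have "card (comps B) = card (f ` comps B)" using card_image[OF inj] by simp
  also have "\<dots> \<le> card (\<Union>r\<in>S - B. {u\<in>S. H r u})"
    using sub finS by (intro card_mono) auto
  also have "\<dots> \<le> (\<Sum>r\<in>S - B. card {u\<in>S. H r u})" using finS by (intro card_UN_le) auto
  also have "\<dots> = d * card (S - B)" using regH by simp
  finally show ?thesis .
qed


lemma comps_disjoint: "B \<subseteq> S \<Longrightarrow> pairwise disjnt (comps B)"
  unfolding pairwise_def disjnt_def comps_def using comp_disj by blast

lemma comp_in: "v \<in> comp B v" unfolding comp_def by (simp add: conn_refl)

lemma finite_comp: "B \<subseteq> S \<Longrightarrow> v \<in> B \<Longrightarrow> finite (comp B v)"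
  using comp_sub finS finite_subset by (metis subset_trans)

lemma card_comps2:
  assumes B: "B \<subseteq> S"
  shows "d * card (comps B) \<le> 2 * card S + 2 * d * card (S - B)"
proof -
  have fB: "finite B" using B finS finite_subset by auto
  have fC: "finite (comps B)" unfolding comps_def using fB by simp
  define big where "big = {C\<in>comps B. d < 2 * card C}"
  define small where "small = {C\<in>comps B. \<not> d < 2 * card C}"
  have split: "comps B = big \<union> small" "big \<inter> small = {}" unfolding big_def small_def by auto
  have fbig: "finite big" "finite small" using fC unfolding big_def small_def by auto
  have Csub: "C \<subseteq> B" "C \<noteq> {}" if "C \<in> comps B" for C
    using that comp_sub comp_in unfolding comps_def by blast+
  have "d * card big \<le> (\<Sum>C\<in>big. 2 * card C)"
  proof -
    have "d * card big = (\<Sum>C\<in>big. d)" by simp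
    also have "\<dots> \<le> (\<Sum>C\<in>big. 2 * card C)" by (intro sum_mono) (auto simp: big_def)
    finally show ?thesis .
  qed
  also have "\<dots> = 2 * card (\<Union>big)"
  proof -
    have "pairwise disjnt big" using comps_disjoint[OF B] unfolding big_def
      by (rule pairwise_subset) auto
    moreover have "\<And>C. C \<in> big \<Longrightarrow> finite C" using Csub fB finite_subset unfolding big_def by blast
    ultimately have "card (\<Union>big) = sum card big" by (rule card_Union_disjoint)
    thus ?thesis by (simp add: sum_distrib_left)
  qed
  also have "\<dots> \<le> 2 * card S"
  proof -
    have "\<Union>big \<subseteq> S" using Csub B unfolding big_def by blast
    thus ?thesis using card_mono[OF finS] by simp
  qed
  finally have bigb: "d * card big \<le> 2 * card S" .
  define g where "g C = (SOME v. v \<in> C)" for C :: "nat set"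
  have g: "g C \<in> C" if "C \<in> comps B" for C
    unfolding g_def using Csub[OF that] by (simp add: some_in_eq)
  have ginj: "inj_on g small"
  proof (rule inj_onI)
    fix C1 C2 assume C: "C1 \<in> small" "C2 \<in> small" "g C1 = g C2"
    have C': "C1 \<in> comps B" "C2 \<in> comps B" using C unfolding small_def by auto
    show "C1 = C2"
    proof (rule ccontr)
      assume ne: "C1 \<noteq> C2"
      have "disjnt C1 C2" using comps_disjoint[OF B] C' ne unfolding pairwise_def by blast
      thus False using g[OF C'(1)] g[OF C'(2)] C(3) unfolding disjnt_def by auto
    qed
  qed
  define V where "V = g ` small"
  have fV: "finite V" using fbig unfolding V_def by auto
  have VB: "V \<subseteq> B" unfolding V_def using g Csub unfolding small_def by blast
  have heavy: "d < 2 * card {r\<in>S - B. H v r}" if v: "v \<in> V" for v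
  proof -
    obtain C where C: "C \<in> small" "v = g C" using v unfolding V_def by blast
    have Cc: "C \<in> comps B" and Cd: "2 * card C \<le> d" using C unfolding small_def by auto
    obtain v0 where v0: "v0 \<in> B" "C = comp B v0" using Cc unfolding comps_def by blast
    have vC: "v \<in> C" using g[OF Cc] C by simp
    have vB: "v \<in> B" using vC Csub[OF Cc] by blast
    have vS: "v \<in> S" using vB B by blast
    have "{u\<in>S. H v u} = {u\<in>B. H v u} \<union> {r\<in>S - B. H v r}" using B by auto
    hence "d = card ({u\<in>B. H v u} \<union> {r\<in>S - B. H v r})" using regH[OF vS] by simp
    also have "\<dots> = card {u\<in>B. H v u} + card {r\<in>S - B. H v r}"
      using fB finS by (intro card_Un_disjoint) auto
    finally have deq: "d = card {u\<in>B. H v u} + card {r\<in>S - B. H v r}" .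
    have "{u\<in>B. H v u} \<subseteq> C - {v}"
    proof
      fix u assume u: "u \<in> {u\<in>B. H v u}"
      have "conn B v u" using u vB by (intro conn_edge) auto
      hence "conn B v0 u" using vC v0(2) conn_trans unfolding comp_def by blast
      hence "u \<in> C" using v0(2) unfolding comp_def by simp
      moreover have "u \<noteq> v" using u irrH vS by auto
      ultimately show "u \<in> C - {v}" by simp
    qed
    hence "card {u\<in>B. H v u} \<le> card (C - {v})"
      using finite_comp[OF B v0(1)] v0(2) by (intro card_mono) auto
    also have "\<dots> = card C - 1" using vC finite_comp[OF B v0(1)] v0(2) by simp
    finally have "card {u\<in>B. H v u} \<le> card C - 1" .
    moreover have "card C \<ge> 1" using vC finite_comp[OF B v0(1)] v0(2)
      by (metis One_nat_def Suc_leI card_gt_0_iff empty_iff)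
    ultimately show ?thesis using deq Cd by linarith
  qed
  have "d * card small = d * card V" unfolding V_def using card_image[OF ginj] by simp
  also have "\<dots> \<le> (\<Sum>v\<in>V. 2 * card {r\<in>S - B. H v r})"
  proof -
    have "d * card V = (\<Sum>v\<in>V. d)" by simp
    also have "\<dots> \<le> (\<Sum>v\<in>V. 2 * card {r\<in>S - B. H v r})"
      using heavy by (intro sum_mono) (simp add: less_imp_le)
    finally show ?thesis .
  qed
  also have "\<dots> = 2 * (\<Sum>r\<in>S - B. card {v\<in>V. H v r})"
    using double_count[OF fV, of "S - B" H] finS by (simp only: sum_distrib_left[symmetric]) simp
  also have "\<dots> \<le> 2 * (\<Sum>r\<in>S - B. card {u\<in>S. H r u})"
  proof -
    have "(\<Sum>r\<in>S - B. card {v\<in>V. H v r}) \<le> (\<Sum>r\<in>S - B. card {u\<in>S. H r u})"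
    proof (intro sum_mono card_mono)
      fix r assume r: "r \<in> S - B"
      show "finite {u\<in>S. H r u}" using finS by simp
      show "{v\<in>V. H v r} \<subseteq> {u\<in>S. H r u}"
        using VB B r symH by blast
    qed
    thus ?thesis by simp
  qed
  also have "\<dots> = 2 * d * card (S - B)" using regH by simp
  finally have smallb: "d * card small \<le> 2 * d * card (S - B)" .
  have "card (comps B) = card big + card small"
    using split fbig card_Un_disjoint by metis
  hence "d * card (comps B) = d * card big + d * card small" by (simp add: add_mult_distrib2)
  thus ?thesis using bigb smallb by linarith
qed

lemma coloring_unique:
  assumes B: "B \<subseteq> S"
    and T: "\<forall>u\<in>B. \<forall>v\<in>B. H u v \<longrightarrow> (u \<in> T \<longleftrightarrow> v \<notin> T)"
    and T': "\<forall>u\<in>B. \<forall>v\<in>B. H u v \<longrightarrow> (u \<in> T' \<longleftrightarrow> v \<notin> T')"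
  shows "conn B x y \<Longrightarrow> (x \<in> T \<longleftrightarrow> x \<in> T') \<Longrightarrow> (y \<in> T \<longleftrightarrow> y \<in> T')"
  unfolding conn_def
proof (induction rule: rtranclp_induct)
  case base then show ?case by simp
next
  case (step y z)
  have "y \<in> B" "z \<in> B" "H y z" using step(2) by auto
  then show ?case using step T T' by blast
qed

end


lemma finite_rand_pairs: "finite (rand_pairs n S)"
proof -
  have "rand_pairs n S \<subseteq> {..<n} \<times> {..<n}" unfolding rand_pairs_def by auto
  thus ?thesis by (rule finite_subset) auto
qed

locale setting = pg S d H for S d H +
  fixes n :: nat and p :: real
  assumes S_sub: "S \<subseteq> {..<n}" and p0: "0 \<le> p" and p1: "p \<le> 1"
    and pk: "10 * ln (real n) / sqrt (real (card S)) \<le> p" and n27: "27 \<le> n"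
begin

definition cons :: "nat set \<Rightarrow> nat set \<Rightarrow> bool" where
  "cons A T \<longleftrightarrow> T \<subseteq> A \<and> (\<forall>u\<in>A \<inter> S. \<forall>v\<in>A \<inter> S. H u v \<longrightarrow> (u \<in> T \<longleftrightarrow> v \<notin> T))"

definition mono :: "nat set \<Rightarrow> nat set \<Rightarrow> (nat \<times> nat) set" where
  "mono A T = {(u,v). (u,v) \<in> rand_pairs n S \<and> u \<in> A \<and> v \<in> A \<and> (u \<in> T \<longleftrightarrow> v \<in> T)}"

lemma bip_cover:
  assumes "bipartite_on (planted_adj S H X) A"
  shows "\<exists>T. cons A T \<and> (\<forall>e\<in>mono A T. \<not> X e)"
proof -
  obtain T where T: "T \<subseteq> A" "\<forall>u\<in>A. \<forall>v\<in>A. planted_adj S H X u v \<longrightarrow> (u \<in> T \<longleftrightarrow> v \<notin> T)"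
    using assms unfolding bipartite_on_def by blast
  have "cons A T" unfolding cons_def using T by (auto simp: planted_adj_def)
  moreover have "\<forall>e\<in>mono A T. \<not> X e"
  proof
    fix e assume e: "e \<in> mono A T"
    then obtain u v where uv: "e = (u,v)" "u < v" "\<not> (u \<in> S \<and> v \<in> S)" "u \<in> A" "v \<in> A"
      "(u \<in> T \<longleftrightarrow> v \<in> T)"
      unfolding mono_def rand_pairs_def by auto
    have "planted_adj S H X u v = X (u,v)" using uv unfolding planted_adj_def by auto
    thus "\<not> X e" using T(2) uv by blast
  qed
  ultimately show ?thesis by blast
qed

lemma finite_cons: "finite A \<Longrightarrow> finite {T. cons A T}"
  unfolding cons_def by (rule finite_subset[of _ "Pow A"]) auto

lemma prob_bip:
  fixes m :: real
  assumes A: "finite A" and m: "\<And>T. cons A T \<Longrightarrow> m \<le> real (card (mono A T))"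
  shows "measure_pmf.prob (planted_pmf n S p) {X. bipartite_on (planted_adj S H X) A}
     \<le> card {T. cons A T} * exp (- p * m)"
proof -
  let ?M = "planted_pmf n S p"
  have "{X. bipartite_on (planted_adj S H X) A} \<subseteq> (\<Union>T\<in>{T. cons A T}. {X. \<forall>e\<in>mono A T. \<not> X e})"
    using bip_cover by blast
  hence "measure_pmf.prob ?M {X. bipartite_on (planted_adj S H X) A}
      \<le> measure_pmf.prob ?M (\<Union>T\<in>{T. cons A T}. {X. \<forall>e\<in>mono A T. \<not> X e})"
    by (intro measure_pmf.finite_measure_mono) auto
  also have "\<dots> \<le> (\<Sum>T\<in>{T. cons A T}. measure_pmf.prob ?M {X. \<forall>e\<in>mono A T. \<not> X e})"
    by (intro measure_subadditive_finite finite_cons A) (auto simp: measure_pmf.emeasure_finite)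
  also have "\<dots> \<le> (\<Sum>T\<in>{T. cons A T}. exp (- p * m))"
  proof (intro sum_mono)
    fix T assume T: "T \<in> {T. cons A T}"
    have "mono A T \<subseteq> rand_pairs n S" unfolding mono_def by auto
    hence "measure_pmf.prob ?M {X. \<forall>e\<in>mono A T. \<not> X e} = (1 - p) ^ card (mono A T)"
      unfolding planted_pmf_def using finite_rand_pairs p0 p1 by (intro prob_no_edges) auto
    also have "\<dots> \<le> exp (- p) ^ card (mono A T)"
      using p1 by (intro power_mono) (auto simp: add.commute[of 1] exp_ge_add_one_self[of "-p", simplified])
    also have "\<dots> = exp (- p * card (mono A T))" by (simp add: exp_of_nat_mult[symmetric] mult.commute)
    also have "\<dots> \<le> exp (- p * m)" using m T p0 by (auto intro: mult_left_mono)
    finally show "measure_pmf.prob ?M {X. \<forall>e\<in>mono A T. \<not> X e} \<le> exp (- p * m)" .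
  qed
  also have "\<dots> = card {T. cons A T} * exp (- p * m)" by simp
  finally show ?thesis .
qed

end


context setting begin

lemma card_cons1:
  assumes A: "finite A"
  shows "card {T. cons A T} \<le> 2 ^ (card (comps (A \<inter> S)) + card (A - S))"
proof -
  let ?B = "A \<inter> S" and ?W = "A - S"
  define Z where "Z = Min ` comps ?B"
  have BS: "?B \<subseteq> S" by auto
  have fZ: "finite Z" unfolding Z_def comps_def using A by simp
  have cZ: "card Z \<le> card (comps ?B)" unfolding Z_def using A by (intro card_image_le) (simp add: comps_def)
  have rep: "\<exists>z\<in>Z. conn ?B z x" if x: "x \<in> ?B" for x
  proof -
    have f: "finite (comp ?B x)" using finite_comp[OF BS x] .
    have "Min (comp ?B x) \<in> comp ?B x" using f comp_in by (intro Min_in) auto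
    hence c: "conn ?B x (Min (comp ?B x))" unfolding comp_def by simp
    have "Min (comp ?B x) \<in> Z" unfolding Z_def comps_def using x by blast
    thus ?thesis using conn_sym[OF BS c] by blast
  qed
  have inj: "inj_on (\<lambda>T. T \<inter> (Z \<union> ?W)) {T. cons A T}"
  proof (rule inj_onI)
    fix T T' assume T: "T \<in> {T. cons A T}" "T' \<in> {T. cons A T}" "T \<inter> (Z \<union> ?W) = T' \<inter> (Z \<union> ?W)"
    have cT: "T \<subseteq> A" "\<forall>u\<in>?B. \<forall>v\<in>?B. H u v \<longrightarrow> (u \<in> T \<longleftrightarrow> v \<notin> T)"
      using T(1) unfolding cons_def by auto
    have cT': "T' \<subseteq> A" "\<forall>u\<in>?B. \<forall>v\<in>?B. H u v \<longrightarrow> (u \<in> T' \<longleftrightarrow> v \<notin> T')"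
      using T(2) unfolding cons_def by auto
    have agree: "x \<in> T \<longleftrightarrow> x \<in> T'" if x: "x \<in> A" for x
    proof (cases "x \<in> S")
      case True
      then obtain z where z: "z \<in> Z" "conn ?B z x" using rep x by blast
      have "z \<in> T \<longleftrightarrow> z \<in> T'" using T(3) z(1) by blast
      thus ?thesis using coloring_unique[OF BS cT(2) cT'(2) z(2)] by blast
    next
      case False
      thus ?thesis using T(3) x by blast
    qed
    show "T = T'" using agree cT(1) cT'(1) by blast
  qed
  have "card {T. cons A T} \<le> card (Pow (Z \<union> ?W))"
    using inj fZ A by (intro card_inj_on_le) auto
  also have "\<dots> = 2 ^ card (Z \<union> ?W)" using fZ A by (simp add: card_Pow)
  also have "\<dots> \<le> 2 ^ (card (comps ?B) + card ?W)"
  proof -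
    have "card (Z \<union> ?W) \<le> card Z + card ?W" by (rule card_Un_le)
    thus ?thesis using cZ by (intro power_increasing) auto
  qed
  finally show ?thesis .
qed

lemma card_cons2:
  assumes A: "finite A"
  shows "card {T. cons A T} \<le> 2 ^ card A"
proof -
  have "card {T. cons A T} \<le> card (Pow A)"
    using A by (intro card_mono) (auto simp: cons_def)
  thus ?thesis using A by (simp add: card_Pow)
qed

lemma mono1:
  assumes A: "A \<subseteq> {..<n}" "card A = card S" and T: "cons A T"
    and d1: "d \<ge> 1" and t4: "4 * card (A - S) \<le> card S"
  shows "card (A - S) * card S \<le> 4 * card (mono A T)"
proof -
  let ?B = "A \<inter> S" and ?W = "A - S"
  have fA: "finite A" using A(1) finite_subset by blast
  define cl where "cl w = (if w \<in> T then ?B \<inter> T else ?B - T)" for w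
  have indep: "2 * card (?B \<inter> T) \<le> card S" "2 * card (?B - T) \<le> card S"
    using T unfolding cons_def by (auto intro!: indep_le d1)
  have cB: "card ?B + card ?W = card S"
    using A fA card_Un_disjoint[of ?B ?W] by (metis Int_Diff_Un Int_Diff_disjoint finite_Diff finite_Int)
  have "card (?B \<inter> T) + card (?B - T) = card ?B"
    using fA card_Un_disjoint[of "?B \<inter> T" "?B - T"] by (metis Int_Diff_Un Int_Diff_disjoint finite_Diff finite_Int)
  hence clb: "card S \<le> 4 * card (cl w)" for w
    using indep cB t4 unfolding cl_def by auto
  define f where "f = (\<lambda>(w::nat, v::nat). (min w v, max w v))"
  have inj: "inj_on f (Sigma ?W cl)"
  proof (rule inj_onI)
    fix x y assume xy: "x \<in> Sigma ?W cl" "y \<in> Sigma ?W cl" "f x = f y"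
    obtain w v where x: "x = (w,v)" "w \<notin> S" "v \<in> S" using xy(1) unfolding cl_def by (auto split: if_splits)
    obtain w' v' where y: "y = (w',v')" "w' \<notin> S" "v' \<in> S" using xy(2) unfolding cl_def by (auto split: if_splits)
    have "min w v = min w' v'" "max w v = max w' v'" using xy(3) x y unfolding f_def by auto
    hence "{w, v} = {w', v'}" by (metis max_def min_def doubleton_eq_iff)
    thus "x = y" using x y by (auto simp: doubleton_eq_iff)
  qed
  have sub: "f ` Sigma ?W cl \<subseteq> mono A T"
  proof
    fix e assume "e \<in> f ` Sigma ?W cl"
    then obtain w v where wv: "w \<in> ?W" "v \<in> cl w" "e = f (w,v)" by auto
    have v: "v \<in> ?B" "(v \<in> T \<longleftrightarrow> w \<in> T)" using wv(2) unfolding cl_def by (auto split: if_splits)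
    have "w \<noteq> v" using wv(1) v(1) by auto
    thus "e \<in> mono A T" using wv v A(1) unfolding mono_def rand_pairs_def f_def
      by (auto simp: min_def max_def)
  qed
  have "card (Sigma ?W cl) \<le> card (mono A T)"
  proof -
    have "finite (mono A T)" unfolding mono_def using finite_rand_pairs
      by (rule finite_subset[rotated]) auto
    thus ?thesis using card_inj_on_le[OF inj sub] by simp
  qed
  moreover have "card (Sigma ?W cl) = (\<Sum>w\<in>?W. card (cl w))"
    using fA unfolding cl_def by (intro card_SigmaI) auto
  moreover have "card ?W * card S \<le> 4 * (\<Sum>w\<in>?W. card (cl w))"
  proof -
    have "card ?W * card S = (\<Sum>w\<in>?W. card S)" by simp
    also have "\<dots> \<le> (\<Sum>w\<in>?W. 4 * card (cl w))" using clb by (intro sum_mono) auto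
    finally show ?thesis by (simp add: sum_distrib_left)
  qed
  ultimately show ?thesis by linarith
qed

end


lemma card_pairs:
  fixes Y :: "nat set" assumes fY: "finite Y"
  shows "2 * card {(u,v). u \<in> Y \<and> v \<in> Y \<and> u < v} + card Y = card Y * card Y"
proof -
  let ?P = "{(u,v). u \<in> Y \<and> v \<in> Y \<and> u < v}" and ?Q = "{(u,v). u \<in> Y \<and> v \<in> Y \<and> v < u}"
    and ?D = "{(u,v). u \<in> Y \<and> v \<in> Y \<and> u = v}"
  have fin: "finite (Y \<times> Y)" using fY by simp
  have fP: "finite ?P" "finite ?Q" "finite ?D"
    by (rule finite_subset[OF _ fin]; auto)+
  have "Y \<times> Y = ?P \<union> ?Q \<union> ?D" by auto
  hence "card (Y \<times> Y) = card (?P \<union> ?Q \<union> ?D)" by simp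
  also have "\<dots> = card (?P \<union> ?Q) + card ?D"
    using fP by (intro card_Un_disjoint) auto
  also have "card (?P \<union> ?Q) = card ?P + card ?Q"
    using fP by (intro card_Un_disjoint) auto
  also have "card ?Q = card ?P"
  proof -
    have "?Q = (\<lambda>(u,v). (v,u)) ` ?P" by auto
    moreover have "inj_on (\<lambda>(u,v). (v,u)) ?P" by (auto simp: inj_on_def)
    ultimately show ?thesis by (simp add: card_image)
  qed
  also have "card ?D = card Y"
  proof -
    have "?D = (\<lambda>u. (u,u)) ` Y" by auto
    moreover have "inj_on (\<lambda>u. (u,u)) Y" by (auto simp: inj_on_def)
    ultimately show ?thesis by (simp add: card_image)
  qed
  finally show ?thesis by (simp add: card_cartesian_product)
qed

context setting begin

lemma mono2:
  assumes A: "A \<subseteq> {..<n}" and T: "cons A T"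
  shows "real (card (A - S)) * (real (card (A - S)) - 2) \<le> 8 * real (card (mono A T))"
proof -
  let ?W = "A - S"
  have fA: "finite A" using A(1) finite_subset by blast
  define Y where "Y = (if card (?W \<inter> T) \<ge> card (?W - T) then ?W \<inter> T else ?W - T)"
  have "card (?W \<inter> T) + card (?W - T) = card ?W"
    using fA card_Un_disjoint[of "?W \<inter> T" "?W - T"] by (metis Int_Diff_Un Int_Diff_disjoint finite_Diff finite_Int)
  hence cY: "card ?W \<le> 2 * card Y" unfolding Y_def by auto
  have YW: "Y \<subseteq> ?W" unfolding Y_def by auto
  have fY: "finite Y" using YW fA finite_subset by blast
  have sub: "{(u,v). u \<in> Y \<and> v \<in> Y \<and> u < v} \<subseteq> mono A T"
    using YW A unfolding mono_def rand_pairs_def Y_def by (auto split: if_splits)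
  have "card {(u,v). u \<in> Y \<and> v \<in> Y \<and> u < v} \<le> card (mono A T)"
  proof -
    have "finite (mono A T)" unfolding mono_def using finite_rand_pairs
      by (rule finite_subset[rotated]) auto
    thus ?thesis using sub by (intro card_mono)
  qed
  hence m: "real (card Y) * real (card Y) - real (card Y) \<le> 2 * real (card (mono A T))"
  proof -
    have "real (2 * card {(u,v). u \<in> Y \<and> v \<in> Y \<and> u < v} + card Y) = real (card Y * card Y)"
      using card_pairs[OF fY] by (simp only:)
    hence "2 * real (card {(u,v). u \<in> Y \<and> v \<in> Y \<and> u < v}) + real (card Y) = real (card Y) * real (card Y)"
      by simp
    thus ?thesis using \<open>card {(u,v). u \<in> Y \<and> v \<in> Y \<and> u < v} \<le> card (mono A T)\<close> by linarith
  qed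
  define t where "t = real (card ?W)"
  define c where "c = real (card Y)"
  have tc: "t \<le> 2 * c" using cY unfolding t_def c_def by simp
  show ?thesis
  proof (cases "card ?W = 0")
    case True thus ?thesis by simp
  next
    case False
    hence t1: "t \<ge> 1" unfolding t_def by simp
    have "0 \<le> (2*c - t) * (2*c + t - 2)" using tc t1 by (intro mult_nonneg_nonneg) auto
    hence "t * (t - 2) \<le> 4 * (c * c - c)" by (simp add: algebra_simps)
    also have "\<dots> \<le> 8 * real (card (mono A T))" using m unfolding c_def by simp
    finally show ?thesis unfolding t_def .
  qed
qed

end


lemma ln_ge3: assumes "27 \<le> (x::real)" shows "3 \<le> ln x"
proof -
  have "exp (1::real) \<le> 3" using exp_bound[of 1] by simp
  hence "exp (1::real) ^ 3 \<le> 3 ^ 3" by (intro power_mono) auto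
  hence "exp (3::real) \<le> 27" by (simp add: exp_of_nat_mult[symmetric])
  hence "exp 3 \<le> x" using assms by simp
  moreover have "0 < x" using assms by simp
  ultimately have "ln (exp 3) \<le> ln x" by (subst ln_le_cancel_iff) auto
  thus ?thesis by simp
qed

lemma pow2_exp: "(2::real) ^ N = exp (real N * ln 2)"
  by (subst exp_of_nat_mult) simp

context setting begin

lemma basic:
  assumes k1: "card S \<ge> 1"
  shows "3 \<le> ln (real n)" "10 * ln (real n) \<le> sqrt (card S)" "0 < sqrt (card S)"
    "p * sqrt (card S) \<ge> 10 * ln (real n)"
proof -
  show l: "3 \<le> ln (real n)" using n27 by (intro ln_ge3) simp
  show s: "0 < sqrt (card S)" using k1 by simp
  show "p * sqrt (card S) \<ge> 10 * ln (real n)" using pk s by (simp add: divide_le_eq)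
  moreover have "p * sqrt (card S) \<le> 1 * sqrt (card S)" using p1 s by (intro mult_right_mono) auto
  ultimately show "10 * ln (real n) \<le> sqrt (card S)" by simp
qed

end


context setting begin

lemma comps_real:
  assumes B: "B \<subseteq> S" "B \<noteq> S" and d1: "d \<ge> 1"
  shows "real (card (comps B)) \<le> real (card (S - B)) * (2 * sqrt (card S) + 2)"
proof -
  define c where "c = real (card (comps B))"
  define t where "t = real (card (S - B))"
  define s where "s = sqrt (card S)"
  have t1: "t \<ge> 1" unfolding t_def using B finS
    by (metis Diff_eq_empty_iff One_nat_def Suc_leI card_gt_0_iff finite_Diff of_nat_1 of_nat_le_iff
        subset_antisym)
  have s0: "s \<ge> 0" unfolding s_def by simp
  have ks: "real (card S) = s * s" unfolding s_def by simp
  have c1: "c \<le> real d * t" using card_comps1[OF B] unfolding c_def t_def by (simp flip: of_nat_mult)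
  have c2: "real d * c \<le> 2 * (s * s) + 2 * real d * t"
  proof -
    have "real (d * card (comps B)) \<le> real (2 * card S + 2 * d * card (S - B))"
      using card_comps2[OF B(1)] by (simp only: of_nat_le_iff)
    thus ?thesis unfolding c_def t_def using ks by simp
  qed
  show ?thesis
  proof (cases "real d \<le> s")
    case True
    have "real d * t \<le> s * t" using True t1 by (intro mult_right_mono) auto
    hence "c \<le> s * t" using c1 by linarith
    also have "\<dots> \<le> t * (2 * s + 2)" using s0 t1 by (simp add: algebra_simps)
    finally show ?thesis unfolding c_def t_def s_def .
  next
    case False
    hence ds: "s < real d" by simp
    have "2 * (s * s) \<le> 2 * (real d * s)" using ds s0 by (intro mult_left_mono mult_right_mono) auto
    hence "real d * c \<le> real d * (2 * s + 2 * t)" using c2 by (simp add: algebra_simps)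
    hence "c \<le> 2 * s + 2 * t" using d1 by (simp add: mult_le_cancel_left)
    also have "\<dots> \<le> t * (2 * s + 2)" using s0 t1
    proof -
      have "1 * (2 * s) \<le> t * (2 * s)" using s0 t1 by (intro mult_right_mono) auto
      thus ?thesis by (simp add: algebra_simps)
    qed
    finally show ?thesis unfolding c_def t_def s_def .
  qed
qed

end


context setting begin

lemma prob_A:
  assumes A: "A \<subseteq> {..<n}" "card A = card S" "A \<noteq> S"
  shows "measure_pmf.prob (planted_pmf n S p) {X. bipartite_on (planted_adj S H X) A}
      \<le> exp (- (5 * real (card (A - S))) * ln (real n))"
proof -
  have fA: "finite A" using A(1) finite_subset by blast
  define t where "t = card (A - S)"
  have "A - S \<noteq> {}"
  proof
    assume "A - S = {}"
    hence "A \<subseteq> S" by auto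
    thus False using card_subset_eq[OF finS _ A(2)] A(3) by auto
  qed
  hence t1: "t \<ge> 1" unfolding t_def using fA by (simp add: Suc_leI card_gt_0_iff)
  have tk: "t \<le> card S" unfolding t_def using A(2) fA by (metis card_mono Diff_subset)
  have k1: "card S \<ge> 1" using t1 tk by simp
  note bs = basic[OF k1]
  define L where "L = ln (real n)"
  define s where "s = sqrt (card S)"
  have L3: "3 \<le> L" and sL: "10 * L \<le> s" and s0: "0 < s" and ps: "10 * L \<le> p * s"
    using bs unfolding L_def s_def by auto
  have ks: "real (card S) = s * s" unfolding s_def by simp
  have s30: "30 \<le> s" using L3 sL by simp
  have "(30::real) * 30 \<le> s * s" using s30 by (intro mult_mono) auto
  hence k2: "card S \<ge> 2" using ks by linarith
  have d1: "d \<ge> 1" using d_pos[OF k2] .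
  have cSA: "card (S - A) = t"
  proof -
    have "card (A - S) = card A - card (A \<inter> S)" using fA by (simp add: card_Diff_subset_Int)
    moreover have "card (S - A) = card S - card (S \<inter> A)" using finS by (simp add: card_Diff_subset_Int)
    ultimately show ?thesis unfolding t_def using A(2) by (simp add: Int_commute)
  qed
  have SB: "S - A \<inter> S = S - A" by auto
  let ?P = "measure_pmf.prob (planted_pmf n S p) {X. bipartite_on (planted_adj S H X) A}"
  show ?thesis
  proof (cases "4 * t \<le> card S")
    case True
    define m where "m = real t * real (card S) / 4"
    have m: "m \<le> real (card (mono A T))" if "cons A T" for T
    proof -
      have "t * card S \<le> 4 * card (mono A T)" using mono1[OF A(1,2) that d1] True unfolding t_def by simp
      hence "real (t * card S) \<le> real (4 * card (mono A T))" by (simp only: of_nat_le_iff)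
      thus ?thesis unfolding m_def by simp
    qed
    have "?P \<le> card {T. cons A T} * exp (- p * m)" by (rule prob_bip[OF fA m])
    also have "\<dots> \<le> exp (real t * (2 * s + 3)) * exp (- p * m)"
    proof (intro mult_right_mono)
      have B: "A \<inter> S \<subseteq> S" "A \<inter> S \<noteq> S"
      proof -
        show "A \<inter> S \<subseteq> S" by blast
        show "A \<inter> S \<noteq> S"
        proof
          assume "A \<inter> S = S"
          hence "S \<subseteq> A" by blast
          hence "S = A" using card_subset_eq[OF fA] A(2) by metis
          thus False using A(3) by simp
        qed
      qed
      have c: "real (card (comps (A \<inter> S))) \<le> real t * (2 * s + 2)"
        using comps_real[OF B d1] cSA unfolding s_def by (simp add: SB)
      have "real (card {T. cons A T}) \<le> real (2 ^ (card (comps (A \<inter> S)) + t))"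
        using card_cons1[OF fA] unfolding t_def by (simp only: of_nat_le_iff)
      also have "\<dots> = exp (real (card (comps (A \<inter> S)) + t) * ln 2)" by (simp add: pow2_exp)
      also have "\<dots> \<le> exp (real t * (2 * s + 3))"
      proof -
        have "real (card (comps (A \<inter> S)) + t) * ln 2 \<le> real (card (comps (A \<inter> S)) + t) * 1"
          using ln_2_less_1 by (intro mult_left_mono) auto
        also have "\<dots> \<le> real t * (2 * s + 3)" using c by (simp add: algebra_simps)
        finally show ?thesis by simp
      qed
      finally show "real (card {T. cons A T}) \<le> exp (real t * (2 * s + 3))" .
    qed simp
    also have "\<dots> = exp (real t * (2 * s + 3) - p * m)" by (simp add: exp_add[symmetric])
    also have "\<dots> \<le> exp (- (5 * real t) * L)"
    proof -
      have pm: "p * m = real t * (p * s * s / 4)" unfolding m_def using ks by (simp add: algebra_simps)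
      have "10 * L * s \<le> p * s * s" using ps s0 by (intro mult_right_mono) auto
      moreover have "3 * s \<le> L * s" using L3 s0 by (intro mult_right_mono) auto
      ultimately have key: "2 * s + 3 + 5 * L \<le> p * s * s / 4" using sL s30 by linarith
      have "real t * (2 * s + 3 + 5 * L) \<le> real t * (p * s * s / 4)"
        using key by (intro mult_left_mono) auto
      moreover have "real t * (2 * s + 3) - p * m = real t * (2 * s + 3 + 5 * L) - real t * (p * s * s / 4) + (- (5 * real t) * L)"
        unfolding pm by (simp add: algebra_simps)
      ultimately have "real t * (2 * s + 3) - p * m \<le> - (5 * real t) * L" by linarith
      thus ?thesis by simp
    qed
    finally show ?thesis unfolding t_def L_def .
  next
    case False
    define m where "m = real t * (real t - 2) / 8"
    have m: "m \<le> real (card (mono A T))" if "cons A T" for T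
      using mono2[OF A(1) that] unfolding m_def t_def by simp
    have "?P \<le> card {T. cons A T} * exp (- p * m)" by (rule prob_bip[OF fA m])
    also have "\<dots> \<le> exp (4 * real t) * exp (- p * m)"
    proof (intro mult_right_mono)
      have "real (card {T. cons A T}) \<le> real (2 ^ card A)"
        using card_cons2[OF fA] by (simp only: of_nat_le_iff)
      also have "\<dots> = exp (real (card A) * ln 2)" by (simp add: pow2_exp)
      also have "\<dots> \<le> exp (4 * real t)"
      proof -
        have "real (card A) * ln 2 \<le> real (card A) * 1"
          using ln_2_less_1 by (intro mult_left_mono) auto
        also have "\<dots> \<le> 4 * real t" using False A(2) by simp
        finally show ?thesis by simp
      qed
      finally show "real (card {T. cons A T}) \<le> exp (4 * real t)" .
    qed simp
    also have "\<dots> = exp (4 * real t - p * m)" by (simp add: exp_add[symmetric])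
    also have "\<dots> \<le> exp (- (5 * real t) * L)"
    proof -
      have tgt: "s * s / 4 < real t" using False ks by simp
      have a: "p * (s * s / 4 - 2) \<le> p * (real t - 2)" using tgt p0 by (intro mult_left_mono) auto
      have a': "p * (s * s) / 4 - 2 * p \<le> p * (real t - 2)" using a by (simp add: algebra_simps)
      have b: "(10 * L) * (s / 4) \<le> (p * s) * (s / 4)" using ps s0 by (intro mult_right_mono) auto
      have b': "(L * s) * (10 / 4) \<le> p * (s * s) / 4" using b by (simp add: algebra_simps)
      have c: "(10 * L) * (30 / 4) \<le> (10 * L) * (s / 4)" using L3 s30 by (intro mult_left_mono) auto
      have c': "75 * L \<le> (L * s) * (10 / 4)" using c by (simp add: algebra_simps)
      have key: "32 + 40 * L \<le> p * (real t - 2)" using a' b' c' p1 L3 by linarith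
      have pm: "p * m = real t * (p * (real t - 2)) / 8" unfolding m_def by (simp add: algebra_simps)
      have "real t * (32 + 40 * L) \<le> real t * (p * (real t - 2))"
        using key by (intro mult_left_mono) auto
      moreover have "4 * real t - p * m = real t * (32 + 40 * L) / 8 - real t * (p * (real t - 2)) / 8 + (- (5 * real t) * L)"
        unfolding pm by (simp add: algebra_simps)
      ultimately have "4 * real t - p * m \<le> - (5 * real t) * L" by linarith
      thus ?thesis by simp
    qed
    finally show ?thesis unfolding t_def L_def .
  qed
qed

end


context setting begin

lemma S_good: "bipartite_on (planted_adj S H X) S"
proof -
  obtain S1 S2 where P: "S1 \<union> S2 = S" "S1 \<inter> S2 = {}"
    "\<forall>u\<in>S. \<forall>v\<in>S. H u v \<longrightarrow> (u \<in> S1 \<and> v \<in> S2) \<or> (u \<in> S2 \<and> v \<in> S1)"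
    using pg unfolding planted_graph_def by blast
  show ?thesis unfolding bipartite_on_def
  proof (intro exI[of _ S1] conjI ballI impI)
    show "S1 \<subseteq> S" using P by blast
    fix u v assume uv: "u \<in> S" "v \<in> S" "planted_adj S H X u v"
    hence "H u v" unfolding planted_adj_def by simp
    thus "u \<in> S1 \<longleftrightarrow> v \<notin> S1" using P uv by blast
  qed
qed

definition AA where "AA = {A. A \<subseteq> {..<n} \<and> card A = card S \<and> A \<noteq> S}"

lemma finite_AA: "finite AA"
  unfolding AA_def by (rule finite_subset[of _ "Pow {..<n}"]) auto

lemma exp_n: "exp (- (5 * real t) * ln (real n)) * real n ^ (5 * t) = 1"
proof -
  have n0: "real n > 0" using n27 by simp
  have "real n ^ (5 * t) = exp (real (5 * t) * ln (real n))"
    using n0 by (subst exp_of_nat_mult) simp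
  thus ?thesis by (simp add: exp_add[symmetric])
qed

lemma card_fiber:
  assumes t: "t \<ge> 1"
  shows "real (card {A\<in>AA. card (A - S) = t}) * exp (- (5 * real t) * ln (real n)) \<le> 1 / real n ^ 3"
proof -
  let ?F = "{A\<in>AA. card (A - S) = t}"
  let ?Q = "{B. B \<subseteq> {..<n} \<and> card B = t}"
  have n0: "real n > 0" using n27 by simp
  have inj: "inj_on (\<lambda>A. (S - A, A - S)) ?F"
  proof (rule inj_onI)
    fix A A' assume "A \<in> ?F" "A' \<in> ?F" "(S - A, A - S) = (S - A', A' - S)"
    hence "S - A = S - A'" "A - S = A' - S" by auto
    moreover have "A = (S - (S - A)) \<union> (A - S)" "A' = (S - (S - A')) \<union> (A' - S)" by auto
    ultimately show "A = A'" by metis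
  qed
  have sub: "(\<lambda>A. (S - A, A - S)) ` ?F \<subseteq> ?Q \<times> ?Q"
  proof
    fix x assume "x \<in> (\<lambda>A. (S - A, A - S)) ` ?F"
    then obtain A where A: "A \<in> ?F" "x = (S - A, A - S)" by blast
    have A': "A \<subseteq> {..<n}" "card A = card S" "card (A - S) = t" using A(1) unfolding AA_def by auto
    have fA: "finite A" using A'(1) finite_subset by blast
    have "card (S - A) = card (A - S)"
    proof -
      have "card (A - S) = card A - card (A \<inter> S)" using fA by (simp add: card_Diff_subset_Int)
      moreover have "card (S - A) = card S - card (S \<inter> A)" using finS by (simp add: card_Diff_subset_Int)
      ultimately show ?thesis using A'(2) by (simp add: Int_commute)
    qed
    thus "x \<in> ?Q \<times> ?Q" using A A' S_sub by auto
  qed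
  have "card ?F \<le> card (?Q \<times> ?Q)"
    using card_inj_on_le[OF inj sub] by (simp add: finite_subset[of _ "Pow {..<n}"])
  also have "\<dots> = (n choose t) * (n choose t)"
    by (simp add: card_cartesian_product n_subsets)
  also have "\<dots> \<le> n ^ t * n ^ t"
  proof (cases "t \<le> n")
    case True thus ?thesis using binomial_le_pow[OF True] by (intro mult_mono) auto
  next
    case False thus ?thesis by (simp add: binomial_eq_0)
  qed
  finally have cF: "real (card ?F) \<le> real n ^ t * real n ^ t" by (simp flip: of_nat_mult of_nat_power)
  have "real (card ?F) * exp (- (5 * real t) * ln (real n))
      \<le> real n ^ t * real n ^ t * exp (- (5 * real t) * ln (real n))"
    using cF by (intro mult_right_mono) auto
  also have "\<dots> = 1 / real n ^ (3 * t)"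
  proof -
    have e: "exp (- (5 * real t) * ln (real n)) = 1 / real n ^ (5 * t)"
      using exp_n[of t] n0 by (simp add: field_simps)
    have "real n ^ (5 * t) = real n ^ t * real n ^ t * real n ^ (3 * t)"
      by (simp add: power_add[symmetric])
    thus ?thesis unfolding e using n0 by (simp add: field_simps)
  qed
  also have "\<dots> \<le> 1 / real n ^ 3"
  proof -
    have "real n ^ 3 \<le> real n ^ (3 * t)" using n27 t by (intro power_increasing) auto
    thus ?thesis using n0 by (intro divide_left_mono) auto
  qed
  finally show ?thesis .
qed

lemma fail_bound:
  "measure_pmf.prob (planted_pmf n S p)
     {X. {A. A \<subseteq> {..<n} \<and> card A = card S \<and> bipartite_on (planted_adj S H X) A} \<noteq> {S}}
   \<le> 1 / real n"
proof -
  let ?M = "planted_pmf n S p"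
  let ?f = "\<lambda>A. exp (- (5 * real (card (A - S))) * ln (real n))"
  have n0: "real n > 0" using n27 by simp
  have "{X. {A. A \<subseteq> {..<n} \<and> card A = card S \<and> bipartite_on (planted_adj S H X) A} \<noteq> {S}}
        \<subseteq> (\<Union>A\<in>AA. {X. bipartite_on (planted_adj S H X) A})"
  proof
    fix X assume X: "X \<in> {X. {A. A \<subseteq> {..<n} \<and> card A = card S \<and> bipartite_on (planted_adj S H X) A} \<noteq> {S}}"
    have "S \<in> {A. A \<subseteq> {..<n} \<and> card A = card S \<and> bipartite_on (planted_adj S H X) A}"
      using S_sub S_good by auto
    then obtain A where "A \<subseteq> {..<n}" "card A = card S" "bipartite_on (planted_adj S H X) A" "A \<noteq> S"
      using X by blast
    thus "X \<in> (\<Union>A\<in>AA. {X. bipartite_on (planted_adj S H X) A})" unfolding AA_def by blast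
  qed
  hence "measure_pmf.prob ?M {X. {A. A \<subseteq> {..<n} \<and> card A = card S \<and> bipartite_on (planted_adj S H X) A} \<noteq> {S}}
      \<le> measure_pmf.prob ?M (\<Union>A\<in>AA. {X. bipartite_on (planted_adj S H X) A})"
    by (intro measure_pmf.finite_measure_mono) auto
  also have "\<dots> \<le> (\<Sum>A\<in>AA. measure_pmf.prob ?M {X. bipartite_on (planted_adj S H X) A})"
    by (intro measure_subadditive_finite finite_AA) (auto simp: measure_pmf.emeasure_finite)
  also have "\<dots> \<le> (\<Sum>A\<in>AA. ?f A)"
    by (intro sum_mono prob_A) (auto simp: AA_def)
  also have "\<dots> = (\<Sum>t\<in>(\<lambda>A. card (A - S)) ` AA. \<Sum>A\<in>{A\<in>AA. card (A - S) = t}. ?f A)"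
    by (rule sum.image_gen[OF finite_AA])
  also have "\<dots> = (\<Sum>t\<in>(\<lambda>A. card (A - S)) ` AA. real (card {A\<in>AA. card (A - S) = t}) * exp (- (5 * real t) * ln (real n)))"
    by (intro sum.cong refl) auto
  also have "\<dots> \<le> (\<Sum>t\<in>(\<lambda>A. card (A - S)) ` AA. 1 / real n ^ 3)"
  proof (intro sum_mono card_fiber)
    fix t assume "t \<in> (\<lambda>A. card (A - S)) ` AA"
    then obtain A where A: "A \<in> AA" "t = card (A - S)" by blast
    have A': "A \<subseteq> {..<n}" "card A = card S" "A \<noteq> S" using A(1) unfolding AA_def by auto
    have fA: "finite A" using A'(1) finite_subset by blast
    have "A - S \<noteq> {}"
    proof
      assume "A - S = {}"
      hence "A \<subseteq> S" by auto
      thus False using card_subset_eq[OF finS _ A'(2)] A'(3) by auto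
    qed
    thus "1 \<le> t" using A(2) fA by (simp add: Suc_leI card_gt_0_iff)
  qed
  also have "\<dots> = real (card ((\<lambda>A. card (A - S)) ` AA)) / real n ^ 3" by simp
  also have "\<dots> \<le> real n / real n ^ 3"
  proof -
    have "(\<lambda>A. card (A - S)) ` AA \<subseteq> {1..n}"
    proof
      fix t assume "t \<in> (\<lambda>A. card (A - S)) ` AA"
      then obtain A where A: "A \<in> AA" "t = card (A - S)" by blast
      have A': "A \<subseteq> {..<n}" "card A = card S" "A \<noteq> S" using A(1) unfolding AA_def by auto
      have fA: "finite A" using A'(1) finite_subset by blast
      have "A - S \<noteq> {}"
      proof
        assume "A - S = {}"
        hence "A \<subseteq> S" by auto
        thus False using card_subset_eq[OF finS _ A'(2)] A'(3) by auto
      qed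
      hence "1 \<le> t" using A(2) fA by (simp add: Suc_leI card_gt_0_iff)
      moreover have "A - S \<subseteq> {..<n}" using A' by auto
      hence "card (A - S) \<le> card {..<n}" by (intro card_mono) auto
      ultimately show "t \<in> {1..n}" using A(2) by simp
    qed
    hence "card ((\<lambda>A. card (A - S)) ` AA) \<le> card {1..n}" by (intro card_mono) auto
    hence "real (card ((\<lambda>A. card (A - S)) ` AA)) \<le> real n" by simp
    thus ?thesis using n0 by (intro divide_right_mono) auto
  qed
  also have "\<dots> \<le> 1 / real n"
  proof -
    have "real n * real n * 1 \<le> real n * real n * real n" using n27 by (intro mult_left_mono) auto
    hence "real n * real n \<le> real n ^ 3" by (simp add: power3_eq_cube)
    hence "real n / real n ^ 3 \<le> real n / (real n * real n)" using n0
      by (intro divide_left_mono) auto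
    also have "\<dots> = 1 / real n" using n0 by simp
    finally show ?thesis .
  qed
  finally show ?thesis .
qed

end


lemma good_bound:
  fixes n k d :: nat and p :: real and S :: "nat set" and H :: "nat \<Rightarrow> nat \<Rightarrow> bool"
  assumes "S \<subseteq> {..<n}" "card S = k" "planted_graph S d H" "0 \<le> p" "p \<le> 1"
    "10 * ln (real n) / sqrt (real k) \<le> p" "27 \<le> n"
  shows "1 - 1 / real n \<le> measure_pmf.prob (planted_pmf n S p)
            {X. {A. A \<subseteq> {..<n} \<and> card A = k \<and> bipartite_on (planted_adj S H X) A} = {S}}"
proof -
  have finS: "finite S" using assms(1) finite_subset by blast
  interpret setting S d H n p
    using assms finS by (unfold_locales) auto
  let ?M = "planted_pmf n S p"
  let ?F = "{X. {A. A \<subseteq> {..<n} \<and> card A = card S \<and> bipartite_on (planted_adj S H X) A} \<noteq> {S}}"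
  have "{X. {A. A \<subseteq> {..<n} \<and> card A = k \<and> bipartite_on (planted_adj S H X) A} = {S}} = space (measure_pmf ?M) - ?F"
    using assms(2) by auto
  moreover have "measure_pmf.prob ?M (space (measure_pmf ?M) - ?F) = 1 - measure_pmf.prob ?M ?F"
    by (rule measure_pmf.prob_compl) simp
  ultimately have "measure_pmf.prob ?M {X. {A. A \<subseteq> {..<n} \<and> card A = k \<and> bipartite_on (planted_adj S H X) A} = {S}}
      = 1 - measure_pmf.prob ?M ?F"
    by (simp only:)
  thus ?thesis using fail_bound by simp
qed

theorem lemma3p8:
  fixes k d :: "nat \<Rightarrow> nat" and p :: "nat \<Rightarrow> real"
    and S :: "nat \<Rightarrow> nat set" and H :: "nat \<Rightarrow> nat \<Rightarrow> nat \<Rightarrow> bool"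
  assumes "eventually (\<lambda>n. S n \<subseteq> {..<n} \<and> card (S n) = k n \<and> planted_graph (S n) (d n) (H n)
             \<and> 0 \<le> p n \<and> p n \<le> 1 \<and> p n \<ge> 10 * ln (real n) / sqrt (real (k n))) sequentially"
  shows "(\<lambda>n. measure_pmf.prob (planted_pmf n (S n) (p n))
            {X. {A. A \<subseteq> {..<n} \<and> card A = k n \<and> bipartite_on (planted_adj (S n) (H n) X) A}
                = {S n}}) \<longlonglongrightarrow> 1"
proof (rule tendsto_sandwich)
  show "eventually (\<lambda>n. 1 - 1 / real n \<le> measure_pmf.prob (planted_pmf n (S n) (p n))
            {X. {A. A \<subseteq> {..<n} \<and> card A = k n \<and> bipartite_on (planted_adj (S n) (H n) X) A}
                = {S n}}) sequentially"
    using eventually_conj[OF assms eventually_ge_at_top[of 27]]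
    by eventually_elim (intro good_bound, auto)
  show "eventually (\<lambda>n. measure_pmf.prob (planted_pmf n (S n) (p n))
            {X. {A. A \<subseteq> {..<n} \<and> card A = k n \<and> bipartite_on (planted_adj (S n) (H n) X) A}
                = {S n}} \<le> 1) sequentially"
    by simp
  show "(\<lambda>n. 1 - 1 / real n) \<longlonglongrightarrow> 1"
    using tendsto_diff[OF tendsto_const lim_inverse_n', of 1] by simp
  show "(\<lambda>n. 1::real) \<longlonglongrightarrow> 1" by simp
qed


end
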